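(* Let $\mathbf X\in\mathbb R^{n\times d}$ have full column rank, $1\le k<d$, $\mathbf y\in\mathbb R^n$ and $\lambda>0$. Let $f_\lambda(\mathbf y;\boldsymbol\beta)=\frac1{2n}\|\mathbf y-\mathbf X\boldsymbol\beta\|_2^2+\lambda(\|\boldsymbol\beta_{1:k}\|_2+\|\boldsymbol\beta_{-1:k}\|_1)$ and $\hat{\boldsymbol\beta}^\lambda=\arg\min_{\boldsymbol\beta\in\mathbb R^d}f_\lambda(\mathbf y;\boldsymbol\beta)$. For $\mathbf b\in\mathbb R^k$ let $\hat{\boldsymbol\beta}^\lambda_{-1:k}(\mathbf b)=\arg\min_{\boldsymbol\gamma\in\mathbb R^{d-k}}\big(\frac1{2n}\|\mathbf y-\mathbf X_{1:k}\mathbf b-\mathbf X_{-1:k}\boldsymbol\gamma\|_2^2+\lambda\|\boldsymbol\gamma\|_1\big)$ and let $\hat{\boldsymbol\beta}^\lambda_*(\mathbf b)\in\mathbb R^d$ be the vector whose first $k$ coordinates are $\mathbf b$ and whose remaining coordinates are $\hat{\boldsymbol\beta}^\lambda_{-1:k}(\mathbf b)$. Then for every $\mathbf b\in\mathbb R^k$ the following are equivalent: (1) $\mathbf 0\in\partial_{\boldsymbol\beta_{1:k}}f_\lambda(\mathbf y;\boldsymbol\beta)\big|_{\boldsymbol\beta=\hat{\boldsymbol\beta}^\lambda_*(\mathbf b)}$; (2) $\hat{\boldsymbol\beta}^\lambda=\hat{\boldsymbol\beta}^\lambda_*(\mathbf b)$; (3) $\hat{\boldsymbol\beta}^\lambda_{1:k}=\mathbf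 b$.
   Context: $\mathbf X_{1:k}$ is the first $k$ columns of $\mathbf X$, $\mathbf X_{-1:k}$ the rest; $\boldsymbol\beta_{1:k}$ and $\boldsymbol\beta_{-1:k}$ analogously. $\partial_{\boldsymbol\beta_{1:k}}$ denotes the subdifferential of the (convex) function $\boldsymbol\beta_{1:k}\mapsto f_\lambda(\mathbf y;\boldsymbol\beta)$ with the remaining coordinates held fixed. Both minimizers are unique since $\mathbf X$ and $\mathbf X_{-1:k}$ have full column rank. *)

theory Defs
  imports "HOL-Analysis.Analysis"
begin

text \<open>Coordinates of beta in R^d are indexed by the sum type 'k + 'm:
  Inl a are the first k coordinates (beta_{1:k}), Inr c the remaining d-k
  coordinates (beta_{-1:k}).  Here d = CARD('k) + CARD('m).\<close>

definition head :: "real ^ ('k::finite + 'm::finite) \<Rightarrow> real ^ 'k" where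
  "head \<beta> = (\<chi> a. \<beta> $ Inl a)"

definition tail :: "real ^ ('k::finite + 'm::finite) \<Rightarrow> real ^ 'm" where
  "tail \<beta> = (\<chi> c. \<beta> $ Inr c)"

definition join :: "real ^ 'k::finite \<Rightarrow> real ^ 'm::finite \<Rightarrow> real ^ ('k + 'm)" where
  "join b g = (\<chi> i. case i of Inl a \<Rightarrow> b $ a | Inr c \<Rightarrow> g $ c)"

definition Xhead :: "real ^ ('k::finite + 'm::finite) ^ 'n::finite \<Rightarrow> real ^ 'k ^ 'n" where
  "Xhead X = (\<chi> r a. X $ r $ Inl a)"

definition Xtail :: "real ^ ('k::finite + 'm::finite) ^ 'n::finite \<Rightarrow> real ^ 'm ^ 'n" where
  "Xtail X = (\<chi> r c. X $ r $ Inr c)"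

definition l1norm :: "real ^ 'm::finite \<Rightarrow> real" where
  "l1norm g = (\<Sum>c\<in>UNIV. \<bar>g $ c\<bar>)"

definition f_obj :: "real \<Rightarrow> real ^ ('k::finite + 'm::finite) ^ 'n::finite \<Rightarrow> real ^ 'n
    \<Rightarrow> real ^ ('k + 'm) \<Rightarrow> real" where
  "f_obj lam X y \<beta> = 1 / (2 * real CARD('n)) * (norm (y - X *v \<beta>))\<^sup>2
      + lam * (norm (head \<beta>) + l1norm (tail \<beta>))"

definition beta_hat :: "real \<Rightarrow> real ^ ('k::finite + 'm::finite) ^ 'n::finite \<Rightarrow> real ^ 'n
    \<Rightarrow> real ^ ('k + 'm)" where
  "beta_hat lam X y = (THE \<beta>. \<forall>\<beta>'. f_obj lam X y \<beta> \<le> f_obj lam X y \<beta>')"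

definition g_obj :: "real \<Rightarrow> real ^ ('k::finite + 'm::finite) ^ 'n::finite \<Rightarrow> real ^ 'n
    \<Rightarrow> real ^ 'k \<Rightarrow> real ^ 'm \<Rightarrow> real" where
  "g_obj lam X y b \<gamma> = 1 / (2 * real CARD('n)) * (norm (y - Xhead X *v b - Xtail X *v \<gamma>))\<^sup>2
      + lam * l1norm \<gamma>"

definition gamma_hat :: "real \<Rightarrow> real ^ ('k::finite + 'm::finite) ^ 'n::finite \<Rightarrow> real ^ 'n
    \<Rightarrow> real ^ 'k \<Rightarrow> real ^ 'm" where
  "gamma_hat lam X y b = (THE \<gamma>. \<forall>\<gamma>'. g_obj lam X y b \<gamma> \<le> g_obj lam X y b \<gamma>')"

definition beta_star :: "real \<Rightarrow> real ^ ('k::finite + 'm::finite) ^ 'n::finite \<Rightarrow> real ^ 'n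
    \<Rightarrow> real ^ 'k \<Rightarrow> real ^ ('k + 'm)" where
  "beta_star lam X y b = join b (gamma_hat lam X y b)"

definition subdiff :: "('a::real_inner \<Rightarrow> real) \<Rightarrow> 'a \<Rightarrow> 'a set" where
  "subdiff h x = {s. \<forall>z. h z \<ge> h x + s \<bullet> (z - x)}"

end

theory Submission
  imports Defs
begin

lemma head_join[simp]: "head (join b g) = b" by (simp add: head_def join_def)
lemma tail_join[simp]: "tail (join b g) = g" by (simp add: tail_def join_def)
lemma join_head_tail[simp]: "join (head x) (tail x) = x"
  by (simp add: head_def tail_def join_def vec_eq_iff split: sum.split)
lemma head_add: "head (x + z) = head x + head z" by (simp add: head_def vec_eq_iff)
lemma tail_add: "tail (x + z) = tail x + tail z" by (simp add: tail_def vec_eq_iff)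
lemma head_scale: "head (t *\<^sub>R x) = t *\<^sub>R head x" by (simp add: head_def vec_eq_iff)
lemma tail_scale: "tail (t *\<^sub>R x) = t *\<^sub>R tail x" by (simp add: tail_def vec_eq_iff)
lemma head_diff: "head (x - z) = head x - head z" by (simp add: head_def vec_eq_iff)
lemma tail_diff: "tail (x - z) = tail x - tail z" by (simp add: tail_def vec_eq_iff)

lemma mult_join: "X *v join b g = Xhead X *v b + Xtail X *v g"
proof -
  have "(\<Sum>i\<in>UNIV. X $ r $ i * join b g $ i) = (\<Sum>a\<in>UNIV. X $ r $ Inl a * b $ a) + (\<Sum>c\<in>UNIV. X $ r $ Inr c * g $ c)" for r
  proof -
    have "(\<Sum>i\<in>UNIV. X $ r $ i * join b g $ i) = (\<Sum>i\<in>UNIV <+> UNIV. X $ r $ i * join b g $ i)" by simp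
    also have "\<dots> = (\<Sum>a\<in>UNIV. X $ r $ Inl a * b $ a) + (\<Sum>c\<in>UNIV. X $ r $ Inr c * g $ c)"
      by (subst sum.Plus) (auto simp: join_def)
    finally show ?thesis .
  qed
  then show ?thesis by (simp add: matrix_vector_mult_def Xhead_def Xtail_def vec_eq_iff)
qed

lemma Xtail_mult: "Xtail X *v g = X *v join 0 g" by (simp add: mult_join)

lemma inj_tail: assumes "inj ((*v) X)" shows "inj ((*v) (Xtail X))"
  using assms unfolding inj_def Xtail_mult by (metis tail_join)

lemma l1_conv: assumes "0 \<le> t" "t \<le> 1"
  shows "l1norm ((1-t) *\<^sub>R a + t *\<^sub>R c) \<le> (1-t) * l1norm a + t * l1norm c"
proof -
  have "\<bar>(1-t) * a$i + t * c$i\<bar> \<le> (1-t) * \<bar>a$i\<bar> + t * \<bar>c$i\<bar>" for i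
    using assms by (metis abs_mult abs_of_nonneg abs_triangle_ineq diff_ge_0_iff_ge)
  then have "l1norm ((1-t) *\<^sub>R a + t *\<^sub>R c) \<le> (\<Sum>i\<in>UNIV. (1-t) * \<bar>a$i\<bar> + t * \<bar>c$i\<bar>)"
    unfolding l1norm_def by (intro sum_mono) simp
  also have "\<dots> = (1-t) * l1norm a + t * l1norm c"
    by (simp add: l1norm_def sum.distrib sum_distrib_left)
  finally show ?thesis .
qed

lemma norm_conv: assumes "0 \<le> t" "t \<le> 1"
  shows "norm ((1-t) *\<^sub>R a + t *\<^sub>R c) \<le> (1-t) * norm a + t * norm c"
  using assms by (metis abs_of_nonneg diff_ge_0_iff_ge norm_scaleR norm_triangle_ineq)

lemma l1_ge_norm: "norm g \<le> l1norm g" unfolding l1norm_def by (rule norm_le_l1_cart)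
lemma l1_nonneg: "0 \<le> l1norm g" unfolding l1norm_def by (simp add: sum_nonneg)

lemma cont_l1: "continuous_on S l1norm"
  unfolding l1norm_def by (intro continuous_intros)
lemma cont_head: "continuous_on S head"
  unfolding head_def by (intro continuous_intros)
lemma cont_tail: "continuous_on S tail"
  unfolding tail_def by (intro continuous_intros)

lemma norm_sq_diff: "(norm (r - t *\<^sub>R u))\<^sup>2 = (norm r)\<^sup>2 - 2 * t * (r \<bullet> u) + t\<^sup>2 * (norm u)\<^sup>2"
proof -
  have "(norm (r - t *\<^sub>R u))\<^sup>2 = (r - t *\<^sub>R u) \<bullet> (r - t *\<^sub>R u)" by (rule power2_norm_eq_inner)
  also have "\<dots> = r \<bullet> r - 2 * t * (r \<bullet> u) + t\<^sup>2 * (u \<bullet> u)"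
    by (simp add: inner_diff_left inner_diff_right inner_commute power2_eq_square algebra_simps)
  finally show ?thesis by (simp add: power2_norm_eq_inner)
qed

lemma mid_sq: "(norm ((1/2) *\<^sub>R p + (1/2) *\<^sub>R q))\<^sup>2 = ((norm p)\<^sup>2 + (norm q)\<^sup>2)/2 - (norm (p - q))\<^sup>2 / 4"
  for p q :: "'a::real_inner"
proof -
  have "((1/2)*\<^sub>R p + (1/2)*\<^sub>R q) \<bullet> ((1/2)*\<^sub>R p + (1/2)*\<^sub>R q) = (p\<bullet>p + q\<bullet>q)/2 - ((p-q)\<bullet>(p-q))/4"
    by (simp add: inner_add_left inner_add_right inner_diff_left inner_diff_right inner_commute field_simps)
  then show ?thesis by (simp only: power2_norm_eq_inner)
qed

lemma argmin_unique_ex: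
  fixes A :: "real^'d::finite^'n::finite" and w :: "real^'n" and h :: "real^'d \<Rightarrow> real"
  assumes inj: "inj ((*v) A)" and c: "c > 0" and lam: "lam > 0" and K: "K > 0"
   and hconv: "\<And>u v. h ((1/2) *\<^sub>R u + (1/2) *\<^sub>R v) \<le> (h u + h v)/2"
   and hcont: "continuous_on UNIV h" and hcoer: "\<And>v. norm v \<le> K * h v"
   and Fdef: "\<And>v. F v = c * (norm (w - A *v v))\<^sup>2 + lam * h v"
  shows "\<exists>!v. \<forall>v'. F v \<le> F v'"
proof -
  have Fc: "continuous_on UNIV F"
    unfolding Fdef[abs_def] by (intro continuous_intros hcont[THEN continuous_on_subset]) auto
  define S where "S = {v. F v \<le> F 0}"
  have "closed S" unfolding S_def
    by (intro closed_Collect_le Fc continuous_intros)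
  moreover have "bounded S"
  proof -
    have "norm v \<le> K * F 0 / lam" if "v \<in> S" for v
    proof -
      have "lam * h v \<le> F v" using Fdef[of v] c by (simp add: add_increasing)
      also have "\<dots> \<le> F 0" using that S_def by simp
      finally have "h v \<le> F 0 / lam" using lam by (simp add: field_simps)
      then have "K * h v \<le> K * (F 0 / lam)" using K by (metis mult_left_mono less_imp_le)
      then show ?thesis using hcoer[of v] by simp
    qed
    then show ?thesis unfolding bounded_iff by blast
  qed
  ultimately have "compact S" by (simp add: compact_eq_bounded_closed)
  moreover have "S \<noteq> {}" unfolding S_def by auto
  ultimately obtain v where v: "v \<in> S" "\<forall>z\<in>S. F v \<le> F z"
    using continuous_attains_inf[of S F] Fc continuous_on_subset by blast
  have vmin: "\<forall>v'. F v \<le> F v'"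
  proof
    fix v' show "F v \<le> F v'"
    proof (cases "v' \<in> S")
      case True then show ?thesis using v by auto
    next
      case False then show ?thesis using v unfolding S_def by auto
    qed
  qed
  have uniq: "u = v" if u: "\<forall>v'. F u \<le> F v'" and v: "\<forall>v'. F v \<le> F v'" for u v
  proof -
    define m where "m = (1/2) *\<^sub>R u + (1/2) *\<^sub>R v"
    have am: "A *v m = (1/2)*\<^sub>R (A*v u) + (1/2)*\<^sub>R(A*v v)"
      by (simp add: m_def matrix_vector_right_distrib matrix_vector_mult_scaleR)
    have ww: "w = (1/2)*\<^sub>R w + (1/2)*\<^sub>R w" by (simp add: scaleR_add_left[symmetric])
    have wm: "w - A *v m = (1/2) *\<^sub>R (w - A *v u) + (1/2) *\<^sub>R (w - A *v v)"
      apply (subst ww) unfolding am scaleR_diff_right by (simp add: algebra_simps)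
    have dd: "(w - A *v u) - (w - A *v v) = A *v (v - u)"
      by (simp add: matrix_vector_mult_diff_distrib)
    have sq: "(norm (w - A *v m))\<^sup>2 = ((norm (w - A *v u))\<^sup>2 + (norm (w - A *v v))\<^sup>2)/2 - (norm (A *v (v - u)))\<^sup>2 / 4"
      unfolding wm mid_sq dd ..
    have E: "c * (norm (w - A *v m))\<^sup>2 = c * (norm (w - A *v u))\<^sup>2 / 2 + c * (norm (w - A *v v))\<^sup>2 / 2 - c * (norm (A *v (v - u)))\<^sup>2 / 4"
      unfolding sq by (simp add: field_simps)
    have hm: "h m \<le> (h u + h v)/2" unfolding m_def by (rule hconv)
    have L: "lam * h m \<le> lam * h u / 2 + lam * h v / 2" using mult_left_mono[OF hm, of lam] lam
      by (simp add: field_simps)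
    have "F u \<le> F m" "F v \<le> F m" "F u \<le> F v" "F v \<le> F u" using u v by auto
    then have "c * (norm (A *v (v - u)))\<^sup>2 \<le> 0"
      unfolding Fdef using E L by linarith
    then have "A *v (v - u) = A *v 0" using c by (simp add: mult_le_0_iff)
    then have "v - u = 0" using inj by (meson injD)
    then show ?thesis by simp
  qed
  show ?thesis using vmin uniq by blast
qed

lemma step_t:
  fixes t lam c P Q Nt N0 N1 :: real
  assumes "0 < t" "lam > 0" "lam * (Nt - N0) \<ge> c * (2 * t * P - t\<^sup>2 * Q)" "Nt - N0 \<le> t * (N1 - N0)"
  shows "lam * (N1 - N0) \<ge> c * (2 * P - t * Q)"
proof -
  have "lam * (Nt - N0) \<le> lam * (t * (N1 - N0))" using assms(2,4) by (simp add: mult_left_mono)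
  then have "t * (c * (2 * P - t * Q)) \<le> t * (lam * (N1 - N0))"
    using assms(3) by (simp add: power2_eq_square algebra_simps)
  then show ?thesis using assms(1) by simp
qed

lemma lim_t:
  fixes D K :: real
  assumes "\<And>t. 0 < t \<Longrightarrow> t \<le> 1 \<Longrightarrow> D \<ge> - t * K"
  shows "D \<ge> 0"
proof (rule ccontr)
  assume "\<not> D \<ge> 0"
  then have D: "D < 0" by simp
  have "D \<ge> -K" using assms[of 1] by simp
  then have K: "K > 0" using D by simp
  define t where "t = min 1 (- D / (2 * K))"
  have t0: "0 < t" unfolding t_def using D K by (simp add: divide_neg_pos)
  have t1: "t \<le> 1" unfolding t_def by simp
  have "t * K \<le> (- D / (2 * K)) * K" unfolding t_def using K by (intro mult_right_mono) auto
  also have "\<dots> = - D / 2" using K by simp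
  finally have "D \<ge> D / 2" using assms[OF t0 t1] by simp
  then show False using D by simp
qed

lemma sub_join1: "y - X *v join (b0 + t *\<^sub>R d1) g0 = (y - Xhead X *v b0 - Xtail X *v g0) - t *\<^sub>R (Xhead X *v d1)"
  by (simp add: mult_join matrix_vector_right_distrib matrix_vector_mult_scaleR algebra_simps)
lemma sub_join2: "y - X *v join b0 (g0 + t *\<^sub>R d2) = (y - Xhead X *v b0 - Xtail X *v g0) - t *\<^sub>R (Xtail X *v d2)"
  by (simp add: mult_join matrix_vector_right_distrib matrix_vector_mult_scaleR algebra_simps)
lemma sub_join0: "y - X *v join b0 g0 = (y - Xhead X *v b0 - Xtail X *v g0)"
  by (simp add: mult_join algebra_simps)
lemma sub_join3: "y - X *v join (b0 + d1) (g0 + d2) = (y - Xhead X *v b0 - Xtail X *v g0) - 1 *\<^sub>R (Xhead X *v d1 + Xtail X *v d2)"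
  by (simp add: mult_join matrix_vector_right_distrib algebra_simps)

lemma block_global:
  fixes X :: "real ^ ('k::finite + 'm::finite) ^ 'n::finite"
  assumes lam: "lam > 0"
   and A: "\<forall>b'. f_obj lam X y (join b0 g0) \<le> f_obj lam X y (join b' g0)"
   and B: "\<forall>g'. f_obj lam X y (join b0 g0) \<le> f_obj lam X y (join b0 g')"
  shows "f_obj lam X y (join b0 g0) \<le> f_obj lam X y \<beta>"
proof -
  define c where "c = 1 / (2 * real CARD('n))"
  have c: "c > 0" unfolding c_def by simp
  define d1 where "d1 = head \<beta> - b0"
  define d2 where "d2 = tail \<beta> - g0"
  have beta: "\<beta> = join (b0 + d1) (g0 + d2)" unfolding d1_def d2_def by simp
  define r where "r = y - Xhead X *v b0 - Xtail X *v g0"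
  define u1 where "u1 = Xhead X *v d1"
  define u2 where "u2 = Xtail X *v d2"
  have f0: "f_obj lam X y (join b0 g0) = c * (norm r)\<^sup>2 + lam * (norm b0 + l1norm g0)"
    unfolding f_obj_def c_def r_def sub_join0 by simp
  have fb: "f_obj lam X y \<beta> = c * ((norm r)\<^sup>2 - 2 * (r \<bullet> (u1 + u2)) + (norm (u1 + u2))\<^sup>2) + lam * (norm (b0 + d1) + l1norm (g0 + d2))"
    unfolding beta f_obj_def c_def sub_join3 norm_sq_diff r_def u1_def u2_def by simp
  have main: "f_obj lam X y \<beta> - f_obj lam X y (join b0 g0) \<ge> - t * (c * ((norm u1)\<^sup>2 + (norm u2)\<^sup>2))"
    if t0: "0 < t" and t1: "t \<le> 1" for t
  proof -
    have fa: "f_obj lam X y (join (b0 + t *\<^sub>R d1) g0) = c * ((norm r)\<^sup>2 - 2 * t * (r \<bullet> u1) + t\<^sup>2 * (norm u1)\<^sup>2) + lam * (norm (b0 + t *\<^sub>R d1) + l1norm g0)"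
      unfolding f_obj_def c_def sub_join1 norm_sq_diff r_def u1_def by simp
    have fbb: "f_obj lam X y (join b0 (g0 + t *\<^sub>R d2)) = c * ((norm r)\<^sup>2 - 2 * t * (r \<bullet> u2) + t\<^sup>2 * (norm u2)\<^sup>2) + lam * (norm b0 + l1norm (g0 + t *\<^sub>R d2))"
      unfolding f_obj_def c_def sub_join2 norm_sq_diff r_def u2_def by simp
    have a1: "lam * (norm (b0 + t *\<^sub>R d1) - norm b0) \<ge> c * (2 * t * (r \<bullet> u1) - t\<^sup>2 * (norm u1)\<^sup>2)"
      using A[rule_format, of "b0 + t *\<^sub>R d1"] unfolding fa f0 by (simp add: algebra_simps)
    have a2: "lam * (l1norm (g0 + t *\<^sub>R d2) - l1norm g0) \<ge> c * (2 * t * (r \<bullet> u2) - t\<^sup>2 * (norm u2)\<^sup>2)"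
      using B[rule_format, of "g0 + t *\<^sub>R d2"] unfolding fbb f0 by (simp add: algebra_simps)
    have e1: "b0 + t *\<^sub>R d1 = (1 - t) *\<^sub>R b0 + t *\<^sub>R (b0 + d1)" by (simp add: algebra_simps)
    have e2: "g0 + t *\<^sub>R d2 = (1 - t) *\<^sub>R g0 + t *\<^sub>R (g0 + d2)" by (simp add: algebra_simps)
    have c1: "norm (b0 + t *\<^sub>R d1) - norm b0 \<le> t * (norm (b0 + d1) - norm b0)"
      using norm_conv[of t b0 "b0 + d1"] t0 t1 unfolding e1[symmetric] by (simp add: algebra_simps)
    have c2: "l1norm (g0 + t *\<^sub>R d2) - l1norm g0 \<le> t * (l1norm (g0 + d2) - l1norm g0)"
      using l1_conv[of t g0 "g0 + d2"] t0 t1 unfolding e2[symmetric] by (simp add: algebra_simps)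
    have s1: "lam * (norm (b0 + d1) - norm b0) \<ge> c * (2 * (r \<bullet> u1) - t * (norm u1)\<^sup>2)"
      by (rule step_t[OF t0 lam a1 c1])
    have s2: "lam * (l1norm (g0 + d2) - l1norm g0) \<ge> c * (2 * (r \<bullet> u2) - t * (norm u2)\<^sup>2)"
      by (rule step_t[OF t0 lam a2 c2])
    have nn: "c * (norm (u1 + u2))\<^sup>2 \<ge> 0" using c by simp
    show ?thesis unfolding fb f0 using s1 s2 nn
      by (simp add: algebra_simps inner_add_right)
  qed
  have "f_obj lam X y \<beta> - f_obj lam X y (join b0 g0) \<ge> 0"
    by (rule lim_t) (rule main)
  then show ?thesis by simp
qed

lemma fg: "f_obj lam X y (join b g) = g_obj lam X y b g + lam * norm b"
  unfolding f_obj_def g_obj_def sub_join0 by (simp add: algebra_simps)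

lemma f_unique:
  fixes X :: "real ^ ('k::finite + 'm::finite) ^ 'n::finite"
  assumes inj: "inj ((*v) X)" and lam: "lam > 0"
  shows "\<exists>!\<beta>. \<forall>\<beta>'. f_obj lam X y \<beta> \<le> f_obj lam X y \<beta>'"
proof (rule argmin_unique_ex[OF inj _ lam, of "1 / (2 * real CARD('n))" "real CARD('k + 'm)" "\<lambda>\<beta>. norm (head \<beta>) + l1norm (tail \<beta>)" _ y])
  show "0 < 1 / (2 * real CARD('n))" by simp
  show "0 < real CARD('k + 'm)" using zero_less_card_finite[where 'a="'k+'m"] by (simp only: of_nat_0_less_iff)
  show "norm (head ((1/2) *\<^sub>R u + (1/2) *\<^sub>R v)) + l1norm (tail ((1/2) *\<^sub>R u + (1/2) *\<^sub>R v)) \<le> ((norm (head u) + l1norm (tail u)) + (norm (head v) + l1norm (tail v)))/2" for u v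
  proof -
    have "norm (head ((1/2) *\<^sub>R u + (1/2) *\<^sub>R v)) \<le> (1/2) * norm (head u) + (1/2) * norm (head v)"
      using norm_conv[of "1/2" "head u" "head v"] by (simp add: head_add head_scale)
    moreover have "l1norm (tail ((1/2) *\<^sub>R u + (1/2) *\<^sub>R v)) \<le> (1/2) * l1norm (tail u) + (1/2) * l1norm (tail v)"
      using l1_conv[of "1/2" "tail u" "tail v"] by (simp add: tail_add tail_scale)
    ultimately show ?thesis by simp
  qed
  show "continuous_on UNIV (\<lambda>\<beta>. norm (head \<beta>) + l1norm (tail \<beta>))"
    by (intro continuous_intros cont_head continuous_on_compose2[OF cont_l1 cont_tail]) auto
  show "norm v \<le> real CARD('k + 'm) * (norm (head v) + l1norm (tail v))" for v :: "real^('k+'m)"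
  proof -
    have "\<bar>v $ i\<bar> \<le> norm (head v) + l1norm (tail v)" for i
    proof (cases i)
      case (Inl a)
      have "\<bar>v $ i\<bar> = \<bar>head v $ a\<bar>" by (simp add: Inl head_def)
      also have "\<dots> \<le> norm (head v)" by (rule component_le_norm_cart)
      finally show ?thesis using l1_nonneg[of "tail v"] by simp
    next
      case (Inr c)
      have "\<bar>v $ i\<bar> = \<bar>tail v $ c\<bar>" by (simp add: Inr tail_def)
      also have "\<dots> \<le> l1norm (tail v)" unfolding l1norm_def
        by (rule member_le_sum) auto
      finally show ?thesis by (simp add: add_increasing)
    qed
    then have "(\<Sum>i\<in>UNIV. \<bar>v $ i\<bar>) \<le> of_nat (card (UNIV :: ('k+'m) set)) * (norm (head v) + l1norm (tail v))"
      using sum_bounded_above[of UNIV "\<lambda>i. \<bar>v $ i\<bar>" "norm (head v) + l1norm (tail v)"] by blast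
    then show ?thesis using norm_le_l1_cart[of v] by simp
  qed
qed (simp add: f_obj_def)

lemma g_unique:
  fixes X :: "real ^ ('k::finite + 'm::finite) ^ 'n::finite"
  assumes inj: "inj ((*v) X)" and lam: "lam > 0"
  shows "\<exists>!\<gamma>. \<forall>\<gamma>'. g_obj lam X y b \<gamma> \<le> g_obj lam X y b \<gamma>'"
proof (rule argmin_unique_ex[OF inj_tail[OF inj] _ lam, of "1 / (2 * real CARD('n))" 1 l1norm _ "y - Xhead X *v b"])
  show "0 < 1 / (2 * real CARD('n))" by simp
  show "l1norm ((1/2) *\<^sub>R u + (1/2) *\<^sub>R v) \<le> (l1norm u + l1norm v)/2" for u v :: "real^'m"
    using l1_conv[of "1/2" u v] by simp
qed (auto simp: g_obj_def cont_l1 l1_ge_norm)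

theorem lemmaC9:
  fixes X :: "real ^ ('k::finite + 'm::finite) ^ 'n::finite"
    and y :: "real ^ 'n" and lam :: real and b :: "real ^ 'k"
  assumes "rank X = CARD('k + 'm)"
    and "lam > 0"
  shows "(0 \<in> subdiff (\<lambda>b'. f_obj lam X y (join b' (tail (beta_star lam X y b))))
                 (head (beta_star lam X y b))
          \<longleftrightarrow> beta_hat lam X y = beta_star lam X y b)
       \<and> (beta_hat lam X y = beta_star lam X y b \<longleftrightarrow> head (beta_hat lam X y) = b)"
proof -
  have inj: "inj ((*v) X)" using assms(1) full_rank_injective by blast
  note fu = f_unique[OF inj assms(2), of y]
  note gu = g_unique[OF inj assms(2), of y b]
  define B where "B = beta_hat lam X y"
  define gh where "gh = gamma_hat lam X y b"
  have Bmin: "\<forall>\<beta>'. f_obj lam X y B \<le> f_obj lam X y \<beta>'"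
    unfolding B_def beta_hat_def by (rule theI'[OF fu])
  have ghmin: "\<forall>\<gamma>'. g_obj lam X y b gh \<le> g_obj lam X y b \<gamma>'"
    unfolding gh_def gamma_hat_def by (rule theI'[OF gu])
  have Buniq: "\<beta> = B" if "\<forall>\<beta>'. f_obj lam X y \<beta> \<le> f_obj lam X y \<beta>'" for \<beta>
    using fu that Bmin by blast
  have ghuniq: "\<gamma> = gh" if "\<forall>\<gamma>'. g_obj lam X y b \<gamma> \<le> g_obj lam X y b \<gamma>'" for \<gamma>
    using gu that ghmin by blast
  have bs: "beta_star lam X y b = join b gh" unfolding beta_star_def gh_def ..
  have gmin': "\<forall>g'. f_obj lam X y (join b gh) \<le> f_obj lam X y (join b g')"
    using ghmin by (simp add: fg)
  have e1: "(0 \<in> subdiff (\<lambda>b'. f_obj lam X y (join b' (tail (beta_star lam X y b))))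
                 (head (beta_star lam X y b))) \<longleftrightarrow> (\<forall>b'. f_obj lam X y (join b gh) \<le> f_obj lam X y (join b' gh))"
    unfolding bs subdiff_def by simp
  have e2: "(\<forall>b'. f_obj lam X y (join b gh) \<le> f_obj lam X y (join b' gh)) \<longleftrightarrow> B = join b gh"
  proof
    assume a: "\<forall>b'. f_obj lam X y (join b gh) \<le> f_obj lam X y (join b' gh)"
    have "\<forall>\<beta>'. f_obj lam X y (join b gh) \<le> f_obj lam X y \<beta>'"
      using block_global[OF assms(2) a gmin'] by blast
    then show "B = join b gh" using Buniq by metis
  next
    assume "B = join b gh"
    then show "\<forall>b'. f_obj lam X y (join b gh) \<le> f_obj lam X y (join b' gh)" using Bmin by metis
  qed
  have e3: "B = join b gh \<longleftrightarrow> head B = b"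
  proof
    assume "B = join b gh" then show "head B = b" by simp
  next
    assume h: "head B = b"
    have "\<forall>\<gamma>'. g_obj lam X y b (tail B) \<le> g_obj lam X y b \<gamma>'"
    proof
      fix \<gamma>'
      have "f_obj lam X y (join b (tail B)) \<le> f_obj lam X y (join b \<gamma>')"
        using Bmin h by (metis join_head_tail)
      then show "g_obj lam X y b (tail B) \<le> g_obj lam X y b \<gamma>'" by (simp add: fg)
    qed
    then have "tail B = gh" by (rule ghuniq)
    then show "B = join b gh" using h by (metis join_head_tail)
  qed
  show ?thesis using e1 e2 e3 unfolding B_def[symmetric] bs by blast
qed

end
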